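(* Let $R$ be a formal resonant vector field and $\Phi$ a resonant analytic diffeomorphism which is tangent to identity. Then $D\Phi\cdot R$ is a formal resonant vector field.
   Context: Fix $\omega\in\mathbb{R}^d$ and $\lambda_1,\dots,\lambda_n\in\mathbb{C}$; $X$ are periodic variables (Fourier expansions in $e^{i\langle P,X\rangle}$, $P\in\mathbb{Z}^d$), $Y\in\mathbb{C}^n$, $|Q|=\sum Q_j$, $\langle Q,\Lambda\rangle=\sum Q_j\lambda_j$. A formal Fourier–Taylor series is $f=\sum f_{P,Q}e^{i\langle P,X\rangle}Y^Q$ with $\sum_P|f_{P,Q}|^2<\infty$ for each $Q$; it has order $k$ if $f_{P,Q}=0$ for $|Q|\le k-1$, and is resonant if $f_{P,Q}\ne0\Rightarrow i\langle P,\omega\rangle+\langle Q,\Lambda\rangle=0$. A formal vector field is a $(d+n)$-tuple $(R_1,\dots,R_{d+n})$ of formal series; it is resonant if $R_1,\dots,R_d$ are resonant and, for each $j'$, $R_{d+j',P,Q}\ne0\Rightarrow i\langle P,\omega\rangle+\langle Q,\Lambda\rangle-\lambda_{j'}=0$. A map $\Phi$ is tangent to identity if $\Phi_L-X_L$ has order $1$ for $L\le d$ and $\Phi_{d+j'}-Y_{j'}$ has order $2$. Writing $\Phi_j=X_j+\tilde\Phi_j$ ($j\le d$) and $\Phi_{d+j'}=Y_{j'}\tilde\Phi_{d+j'}$, $\Phi$ is resonant if all $\tilde\Phi_1,\dots,\tilde\Phi_{d+n}$ are resonant series. $D\Phi\cdot R$ denotes the Jacobian matrix of $\Phi$ (in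 the variables $X_1,\dots,X_d,Y_1,\dots,Y_n$) applied to $R$. *)

theory Defs
  imports "HOL-Analysis.Analysis"
begin

text \<open>A formal Fourier--Taylor series in the periodic variables X (indexed by 'd)
  and Y (indexed by 'n) is represented by its coefficient function
  f P Q = f_{P,Q}, with P :: int^'d and Q :: nat^'n.\<close>

type_synonym ('d, 'n) fts = "int^'d \<Rightarrow> nat^'n \<Rightarrow> complex"

definition absQ :: "nat^'n::finite \<Rightarrow> nat" where
  "absQ Q = (\<Sum>j\<in>UNIV. Q $ j)"

definition formal_series :: "('d::finite, 'n::finite) fts \<Rightarrow> bool" where
  "formal_series f \<longleftrightarrow> (\<forall>Q. (\<lambda>P. (cmod (f P Q))\<^sup>2) summable_on UNIV)"

definition has_order :: "nat \<Rightarrow> ('d::finite, 'n::finite) fts \<Rightarrow> bool" where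
  "has_order k f \<longleftrightarrow> (\<forall>P Q. absQ Q < k \<longrightarrow> f P Q = 0)"

definition resonance :: "real^'d::finite \<Rightarrow> complex^'n::finite \<Rightarrow> int^'d \<Rightarrow> nat^'n \<Rightarrow> complex" where
  "resonance \<omega> \<Lambda> P Q =
     \<i> * complex_of_real (\<Sum>j\<in>UNIV. real_of_int (P $ j) * \<omega> $ j)
     + (\<Sum>j\<in>UNIV. of_nat (Q $ j) * \<Lambda> $ j)"

definition resonant_series ::
  "real^'d::finite \<Rightarrow> complex^'n::finite \<Rightarrow> ('d, 'n) fts \<Rightarrow> bool" where
  "resonant_series \<omega> \<Lambda> f \<longleftrightarrow> formal_series f \<and>
     (\<forall>P Q. f P Q \<noteq> 0 \<longrightarrow> resonance \<omega> \<Lambda> P Q = 0)"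

text \<open>Formal vector fields: (d+n)-tuples of formal series, indexed by 'd + 'n
  (Inl L for the X-components, Inr j for the Y-components).\<close>

definition formal_vf :: "('d::finite + 'n::finite \<Rightarrow> ('d, 'n) fts) \<Rightarrow> bool" where
  "formal_vf R \<longleftrightarrow> (\<forall>i. formal_series (R i))"

definition resonant_vf ::
  "real^'d::finite \<Rightarrow> complex^'n::finite \<Rightarrow> ('d + 'n \<Rightarrow> ('d, 'n) fts) \<Rightarrow> bool" where
  "resonant_vf \<omega> \<Lambda> R \<longleftrightarrow> formal_vf R \<and>
     (\<forall>L. resonant_series \<omega> \<Lambda> (R (Inl L))) \<and>
     (\<forall>j' P Q. R (Inr j') P Q \<noteq> 0 \<longrightarrow> resonance \<omega> \<Lambda> P Q - \<Lambda> $ j' = 0)"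

text \<open>Analytic series: convergent on a neighbourhood {|Im X| < r, |Y_j| < rho}
  of the torus (absolute convergence of the Fourier--Taylor expansion).\<close>
definition analytic_series :: "('d::finite, 'n::finite) fts \<Rightarrow> bool" where
  "analytic_series f \<longleftrightarrow> (\<exists>r>0. \<exists>\<rho>>0.
     (\<lambda>(P, Q). cmod (f P Q) * exp (r * (\<Sum>j\<in>UNIV. real_of_int \<bar>P $ j\<bar>)) * \<rho> ^ absQ Q)
       summable_on UNIV)"

definition ts_Y :: "'n \<Rightarrow> ('d::finite, 'n::finite) fts" where
  "ts_Y j = (\<lambda>P Q. if P = 0 \<and> Q = (\<chi> i. if i = j then 1 else 0) then 1 else 0)"

definition ts_mulY :: "'n \<Rightarrow> ('d::finite, 'n::finite) fts \<Rightarrow> ('d, 'n) fts" where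
  "ts_mulY j f = (\<lambda>P Q. if Q $ j \<ge> 1 then f P (\<chi> i. if i = j then Q $ i - 1 else Q $ i) else 0)"

definition ts_dX :: "'d \<Rightarrow> ('d::finite, 'n::finite) fts \<Rightarrow> ('d, 'n) fts" where
  "ts_dX k f = (\<lambda>P Q. \<i> * of_int (P $ k) * f P Q)"

definition ts_dY :: "'n \<Rightarrow> ('d::finite, 'n::finite) fts \<Rightarrow> ('d, 'n) fts" where
  "ts_dY j f = (\<lambda>P Q. of_nat (Q $ j + 1) * f P (\<chi> i. if i = j then Q $ i + 1 else Q $ i))"

definition ts_mult :: "('d::finite, 'n::finite) fts \<Rightarrow> ('d, 'n) fts \<Rightarrow> ('d, 'n) fts" where
  "ts_mult f g = (\<lambda>P Q. \<Sum>Q1\<in>{Q1. \<forall>j. Q1 $ j \<le> Q $ j}.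
       infsum (\<lambda>P1. f P1 Q1 * g (P - P1) (\<chi> j. Q $ j - Q1 $ j)) UNIV)"

text \<open>A map Phi is represented by tPhi: Phi_L = X_L + tPhi (Inl L),
  Phi_{d+j} = Y_j * tPhi (Inr j).\<close>

definition tangent_to_id :: "('d::finite + 'n::finite \<Rightarrow> ('d, 'n) fts) \<Rightarrow> bool" where
  "tangent_to_id tPhi \<longleftrightarrow> (\<forall>L. has_order 1 (tPhi (Inl L))) \<and>
     (\<forall>j. has_order 2 (\<lambda>P Q. ts_mulY j (tPhi (Inr j)) P Q - ts_Y j P Q))"

definition resonant_map ::
  "real^'d::finite \<Rightarrow> complex^'n::finite \<Rightarrow> ('d + 'n \<Rightarrow> ('d, 'n) fts) \<Rightarrow> bool" where
  "resonant_map \<omega> \<Lambda> tPhi \<longleftrightarrow> (\<forall>i. resonant_series \<omega> \<Lambda> (tPhi i))"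

definition analytic_map :: "('d::finite + 'n::finite \<Rightarrow> ('d, 'n) fts) \<Rightarrow> bool" where
  "analytic_map tPhi \<longleftrightarrow> (\<forall>i. analytic_series (tPhi i))"

definition jac_apply ::
  "('d::finite + 'n::finite \<Rightarrow> ('d, 'n) fts) \<Rightarrow> ('d + 'n \<Rightarrow> ('d, 'n) fts) \<Rightarrow> ('d + 'n \<Rightarrow> ('d, 'n) fts)" where
  "jac_apply tPhi R = (\<lambda>i. case i of
      Inl L \<Rightarrow> (\<lambda>P Q. R (Inl L) P Q
                 + (\<Sum>k\<in>UNIV. ts_mult (ts_dX k (tPhi (Inl L))) (R (Inl k)) P Q)
                 + (\<Sum>j\<in>UNIV. ts_mult (ts_dY j (tPhi (Inl L))) (R (Inr j)) P Q))
    | Inr j' \<Rightarrow> (\<lambda>P Q.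
                   (\<Sum>k\<in>UNIV. ts_mult (ts_dX k (ts_mulY j' (tPhi (Inr j')))) (R (Inl k)) P Q)
                 + (\<Sum>j\<in>UNIV. ts_mult (ts_dY j (ts_mulY j' (tPhi (Inr j')))) (R (Inr j)) P Q)))"

end

theory Submission
  imports Defs
begin


lemma has_sum_sum_fun:
  fixes f :: "'a \<Rightarrow> 'b \<Rightarrow> 'c::topological_comm_monoid_add"
  assumes "finite G" "\<And>x. x \<in> G \<Longrightarrow> (f x has_sum s x) A"
  shows "((\<lambda>y. \<Sum>x\<in>G. f x y) has_sum (\<Sum>x\<in>G. s x)) A"
  using assms
proof (induction G rule: finite_induct)
  case empty then show ?case by simp
next
  case (insert x F)
  then show ?case by (simp add: has_sum_add)
qed

lemma young:
  fixes a b :: "'i::ab_group_add \<Rightarrow> complex"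
  assumes A: "(\<lambda>x. cmod (a x)) summable_on UNIV"
    and B: "(\<lambda>x. (cmod (b x))\<^sup>2) summable_on UNIV"
  shows "(\<lambda>P. (cmod (infsum (\<lambda>P1. a P1 * b (P - P1)) UNIV))\<^sup>2) summable_on UNIV"
proof -
  define SA where "SA = infsum (\<lambda>x. cmod (a x)) UNIV"
  define SB where "SB = infsum (\<lambda>x. (cmod (b x))\<^sup>2) UNIV"
  have SA0: "SA \<ge> 0" unfolding SA_def by (simp add: infsum_nonneg)
  have SB0: "SB \<ge> 0" unfolding SB_def by (simp add: infsum_nonneg)
  have bsq: "(cmod (b y))\<^sup>2 \<le> SB" for y
    using finite_sum_le_infsum[OF B, of "{y}"] by (simp add: SB_def)
  have bb: "cmod (b y) \<le> sqrt SB" for y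
    using bsq[of y] real_le_rsqrt by blast
  define c where "c P = infsum (\<lambda>P1. cmod (a P1) * (cmod (b (P - P1)))\<^sup>2) UNIV" for P
  have c0: "c P \<ge> 0" for P unfolding c_def by (simp add: infsum_nonneg)
  have csum: "(\<lambda>P1. cmod (a P1) * (cmod (b (P - P1)))\<^sup>2) summable_on UNIV" for P
    by (rule summable_on_comparison_test[OF summable_on_cmult_left[OF A, of SB]])
       (auto intro: mult_left_mono bsq)
  have tsum: "(\<lambda>P1. cmod (a P1) * cmod (b (P - P1))) summable_on UNIV" for P
    by (rule summable_on_comparison_test[OF summable_on_cmult_left[OF A, of "sqrt SB"]])
       (auto intro: mult_left_mono bb)
  have key: "(cmod (infsum (\<lambda>P1. a P1 * b (P - P1)) UNIV))\<^sup>2 \<le> SA * c P" for P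
  proof -
    let ?T = "infsum (\<lambda>P1. cmod (a P1) * cmod (b (P - P1))) UNIV"
    have n1: "cmod (infsum (\<lambda>P1. a P1 * b (P - P1)) UNIV) \<le> ?T"
      using norm_infsum_bound[of "\<lambda>P1. a P1 * b (P - P1)" UNIV] tsum[of P] by (simp add: norm_mult)
    have T2: "?T \<le> sqrt (SA * c P)"
    proof (rule infsum_le_finite_sums[OF tsum])
      fix F :: "'i set" assume F: "finite F"
      have "(\<Sum>x\<in>F. cmod (a x) * cmod (b (P - x)))\<^sup>2
          = (\<Sum>x\<in>F. sqrt (cmod (a x)) * (sqrt (cmod (a x)) * cmod (b (P - x))))\<^sup>2"
        by (simp add: mult.assoc[symmetric])
      also have "\<dots> \<le> (\<Sum>x\<in>F. (sqrt (cmod (a x)))\<^sup>2) * (\<Sum>x\<in>F. (sqrt (cmod (a x)) * cmod (b (P - x)))\<^sup>2)"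
        by (rule Cauchy_Schwarz_ineq_sum)
      also have "\<dots> = (\<Sum>x\<in>F. cmod (a x)) * (\<Sum>x\<in>F. cmod (a x) * (cmod (b (P - x)))\<^sup>2)"
        by (simp add: power_mult_distrib)
      also have "\<dots> \<le> SA * c P"
        unfolding SA_def c_def
        by (rule mult_mono) (auto intro!: finite_sum_le_infsum A csum F sum_nonneg infsum_nonneg)
      finally show "(\<Sum>x\<in>F. cmod (a x) * cmod (b (P - x))) \<le> sqrt (SA * c P)"
        using real_le_rsqrt by blast
    qed
    have T0: "0 \<le> cmod (infsum (\<lambda>P1. a P1 * b (P - P1)) UNIV)" by simp
    have "(cmod (infsum (\<lambda>P1. a P1 * b (P - P1)) UNIV))\<^sup>2 \<le> (sqrt (SA * c P))\<^sup>2"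
      using n1 T2 T0 by (intro power_mono) auto
    also have "\<dots> = SA * c P" using SA0 c0[of P] by simp
    finally show ?thesis .
  qed
  have "c summable_on UNIV"
  proof (rule nonneg_bdd_above_summable_on)
    show "0 \<le> c x" for x by (rule c0)
    show "bdd_above (sum c ` {F. F \<subseteq> UNIV \<and> finite F})"
    proof (rule bdd_aboveI2)
      fix G assume "G \<in> {F. F \<subseteq> (UNIV::'i set) \<and> finite F}"
      then have G: "finite G" by simp
      have hs: "((\<lambda>P1. \<Sum>P\<in>G. cmod (a P1) * (cmod (b (P - P1)))\<^sup>2) has_sum (\<Sum>P\<in>G. c P)) UNIV"
        unfolding c_def by (rule has_sum_sum_fun[OF G]) (use csum in auto)
      have hs2: "((\<lambda>P1. cmod (a P1) * SB) has_sum (SA * SB)) UNIV"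
        unfolding SA_def by (rule has_sum_cmult_left) (use A in simp)
      show "sum c G \<le> SA * SB"
      proof (rule has_sum_mono[OF hs hs2])
        fix P1
        have "(\<Sum>P\<in>G. (cmod (b (P - P1)))\<^sup>2) = (\<Sum>y\<in>(\<lambda>P. P - P1) ` G. (cmod (b y))\<^sup>2)"
          by (subst sum.reindex) (auto simp: inj_on_def)
        also have "\<dots> \<le> SB" unfolding SB_def
          by (rule finite_sum_le_infsum[OF B]) (use G in auto)
        finally have "(\<Sum>P\<in>G. (cmod (b (P - P1)))\<^sup>2) \<le> SB" .
        then show "(\<Sum>P\<in>G. cmod (a P1) * (cmod (b (P - P1)))\<^sup>2) \<le> cmod (a P1) * SB"
          by (simp add: sum_distrib_left[symmetric] mult_left_mono)
      qed
    qed
  qed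
  then show ?thesis
    by (rule summable_on_comparison_test[OF summable_on_cmult_right[of c UNIV SA]]) (use key in auto)
qed



definition l2 :: "('i \<Rightarrow> complex) \<Rightarrow> bool" where
  "l2 h \<longleftrightarrow> (\<lambda>P. (cmod (h P))\<^sup>2) summable_on UNIV"
definition l1 :: "('i \<Rightarrow> complex) \<Rightarrow> bool" where
  "l1 h \<longleftrightarrow> (\<lambda>P. cmod (h P)) summable_on UNIV"

lemma l2_zero: "l2 (\<lambda>_. 0)" by (simp add: l2_def)

lemma l2_add: assumes "l2 f" "l2 g" shows "l2 (\<lambda>P. f P + g P)"
proof -
  have s: "(\<lambda>P. 2 * (cmod (f P))\<^sup>2 + 2 * (cmod (g P))\<^sup>2) summable_on UNIV"
    using assms unfolding l2_def
    by (intro summable_on_add summable_on_cmult_right) auto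
  have "(cmod (f P + g P))\<^sup>2 \<le> 2 * (cmod (f P))\<^sup>2 + 2 * (cmod (g P))\<^sup>2" for P
  proof -
    have "cmod (f P + g P) \<le> cmod (f P) + cmod (g P)" by (rule norm_triangle_ineq)
    then have "(cmod (f P + g P))\<^sup>2 \<le> (cmod (f P) + cmod (g P))\<^sup>2"
      by (intro power_mono) auto
    also have "\<dots> \<le> 2 * (cmod (f P))\<^sup>2 + 2 * (cmod (g P))\<^sup>2"
      by (smt (verit) sum_squares_bound power2_sum zero_le_power2 power2_diff)
    finally show ?thesis .
  qed
  then show ?thesis unfolding l2_def
    by (rule_tac summable_on_comparison_test[OF s]) auto
qed

lemma l2_sum: assumes "\<And>x. x \<in> A \<Longrightarrow> l2 (f x)" shows "l2 (\<lambda>P. \<Sum>x\<in>A. f x P)"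
proof (cases "finite A")
  case True
  then show ?thesis using assms
    by (induction A rule: finite_induct) (auto simp: l2_zero intro: l2_add)
qed (simp add: l2_zero)

lemma l2_mult:
  fixes f g :: "('d::finite, 'n::finite) fts"
  assumes "\<And>Q. l1 (\<lambda>P. f P Q)" "\<And>Q. l2 (\<lambda>P. g P Q)"
  shows "l2 (\<lambda>P. ts_mult f g P Q)"
  unfolding ts_mult_def
  by (rule l2_sum, unfold l2_def, rule young) (use assms in \<open>auto simp: l1_def l2_def\<close>)

definition W :: "('d::finite, 'n::finite) fts \<Rightarrow> bool" where
  "W f \<longleftrightarrow> (\<forall>Q k. l1 (\<lambda>P. f P Q) \<and> l1 (\<lambda>P. of_int (P $ k) * f P Q))"

lemma W_mulY: assumes "W f" shows "W (ts_mulY j f)"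
  unfolding W_def
proof (intro allI)
  fix Q :: "nat^'b" and k :: 'a
  show "l1 (\<lambda>P. ts_mulY j f P Q) \<and> l1 (\<lambda>P. of_int (P $ k) * ts_mulY j f P Q)"
  proof (cases "Q $ j \<ge> 1")
    case True
    then show ?thesis using assms unfolding W_def ts_mulY_def by simp
  next
    case False
    then show ?thesis unfolding ts_mulY_def l1_def by simp
  qed
qed

lemma W_dY: assumes "W f" shows "W (ts_dY j f)"
  unfolding W_def
proof (intro allI conjI)
  fix Q :: "nat^'b" and k :: 'a
  define Q' where "Q' = (\<chi> i. if i = j then Q $ i + 1 else Q $ i)"
  define c where "c = cmod (of_nat (Q $ j + 1) :: complex)"
  have a1: "(\<lambda>P. cmod (f P Q')) summable_on UNIV" and
       a2: "(\<lambda>P. cmod (of_int (P $ k) * f P Q')) summable_on UNIV"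
    using assms unfolding W_def l1_def by auto
  show "l1 (\<lambda>P. ts_dY j f P Q)"
    using summable_on_cmult_right[OF a1, of c] unfolding l1_def ts_dY_def Q'_def c_def
    by (simp add: norm_mult)
  show "l1 (\<lambda>P. of_int (P $ k) * ts_dY j f P Q)"
    using summable_on_cmult_right[OF a2, of c] unfolding l1_def ts_dY_def Q'_def c_def
    by (simp add: norm_mult mult.left_commute)
qed

lemma W_l1: assumes "W f" shows "l1 (\<lambda>P. ts_dX k f P Q)" "l1 (\<lambda>P. ts_dY j f P Q)"
proof -
  show "l1 (\<lambda>P. ts_dX k f P Q)" using assms unfolding W_def ts_dX_def l1_def
    by (simp add: norm_mult)
  show "l1 (\<lambda>P. ts_dY j f P Q)" using W_dY[OF assms] unfolding W_def by auto
qed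

lemma analytic_W:
  fixes f :: "('d::finite, 'n::finite) fts"
  assumes "analytic_series f" shows "W f"
proof -
  obtain r \<rho> where r: "r > 0" and rho: "\<rho> > 0" and
    S: "(\<lambda>(P, Q). cmod (f P Q) * exp (r * (\<Sum>j\<in>UNIV. real_of_int \<bar>P $ j\<bar>)) * \<rho> ^ absQ Q) summable_on UNIV"
    using assms unfolding analytic_series_def by blast
  show ?thesis unfolding W_def
  proof (intro allI conjI)
    fix Q :: "nat^'n" and k :: 'd
    define w where "w P = cmod (f P Q) * exp (r * (\<Sum>j\<in>UNIV. real_of_int \<bar>P $ j\<bar>)) * \<rho> ^ absQ Q" for P
    have "(\<lambda>(P, Q). cmod (f P Q) * exp (r * (\<Sum>j\<in>UNIV. real_of_int \<bar>P $ j\<bar>)) * \<rho> ^ absQ Q)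
             summable_on ((\<lambda>P. (P, Q)) ` UNIV)"
      by (rule summable_on_subset[OF S]) auto
    then have "(\<lambda>(P, Q). cmod (f P Q) * exp (r * (\<Sum>j\<in>UNIV. real_of_int \<bar>P $ j\<bar>)) * \<rho> ^ absQ Q) \<circ> (\<lambda>P. (P, Q))
             summable_on UNIV"
      by (subst (asm) summable_on_reindex) (auto simp: inj_on_def)
    then have ws: "w summable_on UNIV"
      unfolding w_def o_def by simp
    have rp: "\<rho> ^ absQ Q > 0" using rho by simp
    have w0: "w P \<ge> 0" for P unfolding w_def using rp by simp
    have b1: "cmod (f P Q) \<le> w P / \<rho> ^ absQ Q" for P
    proof -
      have "1 \<le> exp (r * (\<Sum>j\<in>UNIV. real_of_int \<bar>P $ j\<bar>))"
        using r by (simp add: sum_nonneg)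
      then have "cmod (f P Q) \<le> cmod (f P Q) * exp (r * (\<Sum>j\<in>UNIV. real_of_int \<bar>P $ j\<bar>))"
        by (simp add: mult_le_cancel_left1)
      then show ?thesis using rp rho unfolding w_def by (simp add: field_simps)
    qed
    have b2: "cmod (of_int (P $ k) * f P Q) \<le> w P / (r * \<rho> ^ absQ Q)" for P
    proof -
      have "real_of_int \<bar>P $ k\<bar> \<le> (\<Sum>j\<in>UNIV. real_of_int \<bar>P $ j\<bar>)"
        by (rule member_le_sum) auto
      then have "r * real_of_int \<bar>P $ k\<bar> \<le> r * (\<Sum>j\<in>UNIV. real_of_int \<bar>P $ j\<bar>)"
        using r by simp
      also have "\<dots> \<le> exp (r * (\<Sum>j\<in>UNIV. real_of_int \<bar>P $ j\<bar>))"
        by (smt (verit) exp_ge_add_one_self)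
      finally have "r * real_of_int \<bar>P $ k\<bar> * cmod (f P Q) \<le> exp (r * (\<Sum>j\<in>UNIV. real_of_int \<bar>P $ j\<bar>)) * cmod (f P Q)"
        by (simp add: mult_right_mono)
      then have "cmod (of_int (P $ k) * f P Q) * (r * \<rho> ^ absQ Q) \<le> w P"
        unfolding w_def using rp by (simp add: norm_mult algebra_simps)
      then show ?thesis using rp r by (simp add: field_simps)
    qed
    show "l1 (\<lambda>P. f P Q)" unfolding l1_def
      by (rule summable_on_comparison_test[OF summable_on_cmult_left[OF ws, of "1 / \<rho> ^ absQ Q"]])
         (use b1 in auto)
    show "l1 (\<lambda>P. of_int (P $ k) * f P Q)" unfolding l1_def
      by (rule summable_on_comparison_test[OF summable_on_cmult_left[OF ws, of "1 / (r * \<rho> ^ absQ Q)"]])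
         (use b2 in auto)
  qed
qed



lemma res_split:
  assumes "\<forall>j. Q1 $ j \<le> Q $ j"
  shows "resonance \<omega> \<Lambda> P Q = resonance \<omega> \<Lambda> P1 Q1 + resonance \<omega> \<Lambda> (P - P1) (\<chi> j. Q $ j - Q1 $ j)"
proof -
  have a: "(\<Sum>j\<in>UNIV. real_of_int (P $ j) * \<omega> $ j) = (\<Sum>j\<in>UNIV. real_of_int (P1 $ j) * \<omega> $ j)
      + (\<Sum>j\<in>UNIV. real_of_int ((P - P1) $ j) * \<omega> $ j)"
    by (simp add: sum.distrib[symmetric] algebra_simps)
  have b: "(\<Sum>j\<in>UNIV. of_nat (Q $ j) * \<Lambda> $ j) = (\<Sum>j\<in>UNIV. of_nat (Q1 $ j) * \<Lambda> $ j)
      + (\<Sum>j\<in>UNIV. of_nat ((\<chi> j. Q $ j - Q1 $ j) $ j) * \<Lambda> $ j)"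
    using assms by (simp add: sum.distrib[symmetric] algebra_simps of_nat_diff)
  show ?thesis unfolding resonance_def a b by (simp add: algebra_simps)
qed

lemma res_succ:
  "resonance \<omega> \<Lambda> P (\<chi> i. if i = j then Q $ i + 1 else Q $ i) = resonance \<omega> \<Lambda> P Q + \<Lambda> $ j"
proof -
  have "(\<Sum>i\<in>UNIV. of_nat ((\<chi> i. if i = j then Q $ i + 1 else Q $ i) $ i) * \<Lambda> $ i)
     = (\<Sum>i\<in>UNIV. of_nat (Q $ i) * \<Lambda> $ i + (if i = j then \<Lambda> $ i else 0))"
    by (rule sum.cong) (auto simp: algebra_simps)
  also have "\<dots> = (\<Sum>i\<in>UNIV. of_nat (Q $ i) * \<Lambda> $ i) + \<Lambda> $ j"
    by (simp add: sum.distrib)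
  finally show ?thesis unfolding resonance_def by (simp add: algebra_simps)
qed

lemma res_pred:
  assumes "Q $ j \<ge> 1"
  shows "resonance \<omega> \<Lambda> P Q = resonance \<omega> \<Lambda> P (\<chi> i. if i = j then Q $ i - 1 else Q $ i) + \<Lambda> $ j"
proof -
  define Q' where "Q' = (\<chi> i. if i = j then Q $ i - 1 else Q $ i)"
  have eq: "(\<chi> i. if i = j then Q' $ i + 1 else Q' $ i) = Q"
    using assms unfolding Q'_def vec_eq_iff by auto
  have "resonance \<omega> \<Lambda> P (\<chi> i. if i = j then Q' $ i + 1 else Q' $ i) = resonance \<omega> \<Lambda> P Q' + \<Lambda> $ j"
    by (rule res_succ)
  then have "resonance \<omega> \<Lambda> P Q = resonance \<omega> \<Lambda> P Q' + \<Lambda> $ j" by (simp only: eq)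
  then show ?thesis by (simp only: Q'_def)
qed

lemma mult_res:
  assumes "\<And>P1 Q1. f P1 Q1 \<noteq> 0 \<Longrightarrow> resonance \<omega> \<Lambda> P1 Q1 = a"
    and "\<And>P2 Q2. g P2 Q2 \<noteq> 0 \<Longrightarrow> resonance \<omega> \<Lambda> P2 Q2 = b"
    and "ts_mult f g P Q \<noteq> 0"
  shows "resonance \<omega> \<Lambda> P Q = a + b"
proof -
  have sne: "\<And>f A. sum f A \<noteq> (0::complex) \<Longrightarrow> \<exists>x\<in>A. f x \<noteq> 0"
    by (meson sum.neutral)
  have ine: "\<And>f A. infsum f A \<noteq> (0::complex) \<Longrightarrow> \<exists>x\<in>A. f x \<noteq> 0"
    by (meson infsum_0)
  from sne[OF assms(3)[unfolded ts_mult_def]] obtain Q1 where Q1': "Q1 \<in> {Q1. \<forall>j. Q1 $ j \<le> Q $ j}"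
    and ne: "infsum (\<lambda>P1. f P1 Q1 * g (P - P1) (\<chi> j. Q $ j - Q1 $ j)) UNIV \<noteq> 0"
    by blast
  from Q1' have Q1: "\<forall>j. Q1 $ j \<le> Q $ j" by simp
  from ine[OF ne] obtain P1 where "f P1 Q1 * g (P - P1) (\<chi> j. Q $ j - Q1 $ j) \<noteq> 0"
    by blast
  then have "f P1 Q1 \<noteq> 0" "g (P - P1) (\<chi> j. Q $ j - Q1 $ j) \<noteq> 0" by auto
  then show ?thesis using res_split[OF Q1, of \<omega> \<Lambda> P P1] assms(1,2) by simp
qed

lemma sum_zero_if: "(\<And>x. x \<in> A \<Longrightarrow> f x = 0) \<Longrightarrow> sum f A = 0" by simp


theorem lemma5p2:
  fixes \<omega> :: "real^'d::finite" and \<Lambda> :: "complex^'n::finite"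
    and R tPhi :: "'d + 'n \<Rightarrow> ('d, 'n) fts"
  assumes "resonant_vf \<omega> \<Lambda> R"
    and "analytic_map tPhi"
    and "resonant_map \<omega> \<Lambda> tPhi"
    and "tangent_to_id tPhi"
  shows "resonant_vf \<omega> \<Lambda> (jac_apply tPhi R)"
proof -
  let ?res = "resonance \<omega> \<Lambda>"
  have Rl2: "l2 (\<lambda>P. R i P Q)" for i Q
    using assms(1) unfolding resonant_vf_def formal_vf_def formal_series_def l2_def by auto
  have Wt: "W (tPhi i)" for i using assms(2) analytic_W unfolding analytic_map_def by blast
  have WtY: "W (ts_mulY j (tPhi i))" for i j using W_mulY Wt by blast
  have RlX: "R (Inl L) P Q \<noteq> 0 \<Longrightarrow> ?res P Q = 0" for L P Q
    using assms(1) unfolding resonant_vf_def resonant_series_def by auto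
  have RlY: "R (Inr j) P Q \<noteq> 0 \<Longrightarrow> ?res P Q = \<Lambda> $ j" for j P Q
    using assms(1) unfolding resonant_vf_def by auto
  have tr: "tPhi i P Q \<noteq> 0 \<Longrightarrow> ?res P Q = 0" for i P Q
    using assms(3) unfolding resonant_map_def resonant_series_def by auto
  have formal: "formal_series (jac_apply tPhi R i)" for i
    unfolding formal_series_def
  proof
    fix Q
    have "l2 (\<lambda>P. jac_apply tPhi R i P Q)"
    proof (cases i)
      case (Inl L)
      have a: "l2 (\<lambda>P. \<Sum>k\<in>UNIV. ts_mult (ts_dX k (tPhi (Inl L))) (R (Inl k)) P Q)"
        by (rule l2_sum, rule l2_mult, rule W_l1(1), rule Wt, rule Rl2)
      have b: "l2 (\<lambda>P. \<Sum>j\<in>UNIV. ts_mult (ts_dY j (tPhi (Inl L))) (R (Inr j)) P Q)"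
        by (rule l2_sum, rule l2_mult, rule W_l1(2), rule Wt, rule Rl2)
      have c: "l2 (\<lambda>P. R (Inl L) P Q + (\<Sum>k\<in>UNIV. ts_mult (ts_dX k (tPhi (Inl L))) (R (Inl k)) P Q))"
        by (rule l2_add[OF Rl2 a])
      show ?thesis unfolding Inl jac_apply_def sum.case
        by (rule l2_add[OF c b])
    next
      case (Inr j')
      have a: "l2 (\<lambda>P. \<Sum>k\<in>UNIV. ts_mult (ts_dX k (ts_mulY j' (tPhi (Inr j')))) (R (Inl k)) P Q)"
        by (rule l2_sum, rule l2_mult, rule W_l1(1), rule WtY, rule Rl2)
      have b: "l2 (\<lambda>P. \<Sum>j\<in>UNIV. ts_mult (ts_dY j (ts_mulY j' (tPhi (Inr j')))) (R (Inr j)) P Q)"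
        by (rule l2_sum, rule l2_mult, rule W_l1(2), rule WtY, rule Rl2)
      show ?thesis unfolding Inr jac_apply_def sum.case
        by (rule l2_add[OF a b])
    qed
    then show "(\<lambda>P. (cmod (jac_apply tPhi R i P Q))\<^sup>2) summable_on UNIV" by (simp add: l2_def)
  qed
  have resX: "jac_apply tPhi R (Inl L) P Q \<noteq> 0 \<Longrightarrow> ?res P Q = 0" for L P Q
  proof (rule ccontr)
    assume ne: "jac_apply tPhi R (Inl L) P Q \<noteq> 0" and r: "?res P Q \<noteq> 0"
    have t1: "R (Inl L) P Q = 0" using RlX r by blast
    have t2: "ts_mult (ts_dX k (tPhi (Inl L))) (R (Inl k)) P Q = 0" for k
    proof (rule ccontr)
      assume "ts_mult (ts_dX k (tPhi (Inl L))) (R (Inl k)) P Q \<noteq> 0"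
      then have "?res P Q = 0 + 0"
      proof (rule mult_res[rotated 2])
        fix P1 Q1 assume "ts_dX k (tPhi (Inl L)) P1 Q1 \<noteq> 0"
        then have "tPhi (Inl L) P1 Q1 \<noteq> 0" by (simp add: ts_dX_def)
        then show "?res P1 Q1 = 0" by (rule tr)
      qed (rule RlX)
      with r show False by simp
    qed
    have t3: "ts_mult (ts_dY j (tPhi (Inl L))) (R (Inr j)) P Q = 0" for j
    proof (rule ccontr)
      assume "ts_mult (ts_dY j (tPhi (Inl L))) (R (Inr j)) P Q \<noteq> 0"
      then have "?res P Q = - \<Lambda> $ j + \<Lambda> $ j"
      proof (rule mult_res[rotated 2])
        fix P1 Q1 assume "ts_dY j (tPhi (Inl L)) P1 Q1 \<noteq> 0"
        then have "tPhi (Inl L) P1 (\<chi> i. if i = j then Q1 $ i + 1 else Q1 $ i) \<noteq> 0"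
          by (auto simp: ts_dY_def)
        then have "?res P1 (\<chi> i. if i = j then Q1 $ i + 1 else Q1 $ i) = 0" by (rule tr)
        then show "?res P1 Q1 = - \<Lambda> $ j" by (simp add: res_succ eq_neg_iff_add_eq_0)
      qed (rule RlY)
      with r show False by simp
    qed
    from ne show False unfolding jac_apply_def sum.case using t1 t2 t3 by simp
  qed
  have mY: "ts_mulY j' (tPhi (Inr j')) P1 Q1 \<noteq> 0 \<Longrightarrow> ?res P1 Q1 = \<Lambda> $ j'" for j' P1 Q1
  proof -
    assume a: "ts_mulY j' (tPhi (Inr j')) P1 Q1 \<noteq> 0"
    then have q: "Q1 $ j' \<ge> 1" by (auto simp: ts_mulY_def split: if_splits)
    with a have "tPhi (Inr j') P1 (\<chi> i. if i = j' then Q1 $ i - 1 else Q1 $ i) \<noteq> 0"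
      by (auto simp: ts_mulY_def)
    then have "?res P1 (\<chi> i. if i = j' then Q1 $ i - 1 else Q1 $ i) = 0" by (rule tr)
    then show ?thesis using res_pred[OF q, of \<omega> \<Lambda> P1] by simp
  qed
  have resY: "jac_apply tPhi R (Inr j') P Q \<noteq> 0 \<Longrightarrow> ?res P Q - \<Lambda> $ j' = 0" for j' P Q
  proof (rule ccontr)
    assume ne: "jac_apply tPhi R (Inr j') P Q \<noteq> 0" and r: "?res P Q - \<Lambda> $ j' \<noteq> 0"
    have t2: "ts_mult (ts_dX k (ts_mulY j' (tPhi (Inr j')))) (R (Inl k)) P Q = 0" for k
    proof (rule ccontr)
      assume "ts_mult (ts_dX k (ts_mulY j' (tPhi (Inr j')))) (R (Inl k)) P Q \<noteq> 0"
      then have "?res P Q = \<Lambda> $ j' + 0"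
      proof (rule mult_res[rotated 2])
        fix P1 Q1 assume "ts_dX k (ts_mulY j' (tPhi (Inr j'))) P1 Q1 \<noteq> 0"
        then have "ts_mulY j' (tPhi (Inr j')) P1 Q1 \<noteq> 0" by (simp add: ts_dX_def)
        then show "?res P1 Q1 = \<Lambda> $ j'" by (rule mY)
      qed (rule RlX)
      with r show False by simp
    qed
    have t3: "ts_mult (ts_dY j (ts_mulY j' (tPhi (Inr j')))) (R (Inr j)) P Q = 0" for j
    proof (rule ccontr)
      assume "ts_mult (ts_dY j (ts_mulY j' (tPhi (Inr j')))) (R (Inr j)) P Q \<noteq> 0"
      then have "?res P Q = (\<Lambda> $ j' - \<Lambda> $ j) + \<Lambda> $ j"
      proof (rule mult_res[rotated 2])
        fix P1 Q1 assume "ts_dY j (ts_mulY j' (tPhi (Inr j'))) P1 Q1 \<noteq> 0"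
        then have "ts_mulY j' (tPhi (Inr j')) P1 (\<chi> i. if i = j then Q1 $ i + 1 else Q1 $ i) \<noteq> 0"
          by (auto simp: ts_dY_def)
        then have "?res P1 (\<chi> i. if i = j then Q1 $ i + 1 else Q1 $ i) = \<Lambda> $ j'" by (rule mY)
        then show "?res P1 Q1 = \<Lambda> $ j' - \<Lambda> $ j" by (simp add: res_succ algebra_simps)
      qed (rule RlY)
      with r show False by simp
    qed
    from ne show False unfolding jac_apply_def sum.case using t2 t3 by simp
  qed
  have A: "formal_vf (jac_apply tPhi R)" unfolding formal_vf_def using formal by (rule allI)
  have B: "resonant_series \<omega> \<Lambda> (jac_apply tPhi R (Inl L))" for L
    unfolding resonant_series_def using formal[of "Inl L"] resX[of L] by (intro conjI allI impI)
  show ?thesis unfolding resonant_vf_def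
    using A B resY by (intro conjI allI impI) auto
qed

end
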